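(* Let $r\ge 3$ and let $G=K_{n_1,\dots,n_r}$ be a complete $r$-partite graph (all $n_i\ge 1$) of order $n=n_1+\dots+n_r$. Then $\chi_{ei}(G)=1$ if $r=3$ and $G=K_{1,1,1}$; $\chi_{ei}(G)=n-1$ if $r=3$, $n\ge 4$ and $G\in\{K_{n-2,1,1},K_{1,n-2,1},K_{1,1,n-2}\}$; and $\chi_{ei}(G)=n$ otherwise.
   Context: All graphs are finite and simple. A complete $r$-partite graph $K_{n_1,\dots,n_r}$ has its vertex set partitioned into $r$ independent sets of sizes $n_1,\dots,n_r$, with two vertices adjacent if and only if they lie in different parts. A path $P_4$ in $G$ is a sequence $uxyv$ of four distinct vertices with $ux,xy,yv\in E(G)$; $u,v$ are its end vertices. An $e$-injective $k$-coloring of $G$ is a function $f:V(G)\to\{1,\dots,k\}$ with $f(u)\ne f(v)$ whenever $u,v$ are the end vertices of some path $P_4$ in $G$; $\chi_{ei}(G)$ is the least such $k$. *)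

theory Defs
  imports Main
begin

text \<open>A simple graph is given by a vertex set V and a symmetric irreflexive
  edge relation E on V.\<close>

definition P4_ends :: "'a set \<Rightarrow> ('a \<Rightarrow> 'a \<Rightarrow> bool) \<Rightarrow> 'a \<Rightarrow> 'a \<Rightarrow> bool" where
  "P4_ends V E u v \<longleftrightarrow> (\<exists>x y. u \<in> V \<and> x \<in> V \<and> y \<in> V \<and> v \<in> V \<and>
      distinct [u, x, y, v] \<and> E u x \<and> E x y \<and> E y v)"

definition e_injective_coloring :: "'a set \<Rightarrow> ('a \<Rightarrow> 'a \<Rightarrow> bool) \<Rightarrow> nat \<Rightarrow> ('a \<Rightarrow> nat) \<Rightarrow> bool" where
  "e_injective_coloring V E k f \<longleftrightarrow> (\<forall>v\<in>V. f v \<in> {1..k}) \<and>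
      (\<forall>u v. P4_ends V E u v \<longrightarrow> f u \<noteq> f v)"

definition chi_ei :: "'a set \<Rightarrow> ('a \<Rightarrow> 'a \<Rightarrow> bool) \<Rightarrow> nat" where
  "chi_ei V E = (LEAST k. \<exists>f. e_injective_coloring V E k f)"

text \<open>Complete multipartite graph K_{n_1,...,n_r} with part sizes ns = [n_1,...,n_r]:
  vertices (i,j) with i < r, j < n_i; adjacent iff in different parts.\<close>

definition cmp_V :: "nat list \<Rightarrow> (nat \<times> nat) set" where
  "cmp_V ns = {(i, j). i < length ns \<and> j < ns ! i}"

definition cmp_E :: "nat list \<Rightarrow> nat \<times> nat \<Rightarrow> nat \<times> nat \<Rightarrow> bool" where
  "cmp_E ns p q \<longleftrightarrow> p \<in> cmp_V ns \<and> q \<in> cmp_V ns \<and> fst p \<noteq> fst q"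

end

theory Submission
  imports Defs
begin

lemma chi_eq:
  assumes fin: "finite W" and WV: "W \<subseteq> V" and hV: "h ` V \<subseteq> W"
    and conf: "\<forall>p\<in>W. \<forall>q\<in>W. p \<noteq> q \<longrightarrow> P4_ends V E p q"
    and hsep: "\<forall>p q. P4_ends V E p q \<longrightarrow> h p \<noteq> h q"
  shows "chi_ei V E = card W"
proof -
  obtain g where g: "bij_betw g W {1..card W}"
    using finite_same_card_bij[OF fin, of "{1..card W}"] by auto
  have col: "e_injective_coloring V E (card W) (g \<circ> h)"
    unfolding e_injective_coloring_def
  proof (intro conjI allI impI ballI)
    fix v assume "v \<in> V"
    then show "(g \<circ> h) v \<in> {1..card W}" using hV g bij_betwE by fastforce
  next
    fix u v assume P: "P4_ends V E u v"
    then have "u \<in> V" "v \<in> V" unfolding P4_ends_def by auto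
    then have "h u \<in> W" "h v \<in> W" using hV by auto
    moreover have "h u \<noteq> h v" using hsep P by auto
    ultimately show "(g \<circ> h) u \<noteq> (g \<circ> h) v"
      using g by (auto simp: bij_betw_def inj_on_def)
  qed
  have lb: "card W \<le> k" if "e_injective_coloring V E k f" for k f
  proof -
    have "inj_on f W" using that conf unfolding e_injective_coloring_def inj_on_def by blast
    moreover have "f ` W \<subseteq> {1..k}" using that WV unfolding e_injective_coloring_def by auto
    ultimately have "card W \<le> card {1..k}" by (intro card_inj_on_le) auto
    then show ?thesis by simp
  qed
  show ?thesis unfolding chi_ei_def
    by (rule Least_equality) (use col lb in auto)
qed

lemma card_V: "card (cmp_V ns) = sum_list ns"
proof -
  have "cmp_V ns = Sigma {..<length ns} (\<lambda>i. {..<ns!i})" unfolding cmp_V_def by auto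
  then have "card (cmp_V ns) = (\<Sum>i<length ns. ns ! i)" by simp
  then show ?thesis by (simp add: sum_list_sum_nth atLeast0LessThan)
qed

lemma fin_V: "finite (cmp_V ns)"
proof -
  have "cmp_V ns = Sigma {..<length ns} (\<lambda>i. {..<ns!i})" unfolding cmp_V_def by auto
  then show ?thesis by simp
qed

lemma P4_iff:
  assumes len: "length ns \<ge> 3" and pos: "\<forall>i < length ns. ns ! i \<ge> 1"
    and p: "p \<in> cmp_V ns" and q: "q \<in> cmp_V ns"
  shows "P4_ends (cmp_V ns) (cmp_E ns) p q \<longleftrightarrow>
    p \<noteq> q \<and> (fst p = fst q \<or> length ns \<ge> 4 \<or> ns ! fst p \<ge> 2 \<or> ns ! fst q \<ge> 2)"
proof
  assume "P4_ends (cmp_V ns) (cmp_E ns) p q"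
  then obtain x y where xy: "x \<in> cmp_V ns" "y \<in> cmp_V ns" "distinct [p, x, y, q]"
    "fst p \<noteq> fst x" "fst x \<noteq> fst y" "fst y \<noteq> fst q"
    unfolding P4_ends_def cmp_E_def by auto
  show "p \<noteq> q \<and> (fst p = fst q \<or> length ns \<ge> 4 \<or> ns ! fst p \<ge> 2 \<or> ns ! fst q \<ge> 2)"
  proof (rule ccontr)
    assume "\<not> ?thesis"
    then have c: "fst p \<noteq> fst q" "length ns = 3" "ns ! fst p < 2" "ns ! fst q < 2"
      using xy(3) len by auto
    obtain a b where pab: "p = (a, b)" by (cases p)
    obtain c d where qcd: "q = (c, d)" by (cases q)
    obtain e f where xef: "x = (e, f)" by (cases x)
    obtain g h where ygh: "y = (g, h)" by (cases y)
    have "b = 0" "d = 0" using p q c unfolding pab qcd cmp_V_def by auto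
    have "e \<noteq> c"
    proof
      assume "e = c"
      then have "f < 1" using xy(1) c(4) unfolding xef qcd cmp_V_def by auto
      then show False using xy(3) \<open>e = c\<close> \<open>d = 0\<close> unfolding xef qcd by auto
    qed
    have "g \<noteq> a"
    proof
      assume "g = a"
      then have "h < 1" using xy(2) c(3) unfolding ygh pab cmp_V_def by auto
      then show False using xy(3) \<open>g = a\<close> \<open>b = 0\<close> unfolding ygh pab by auto
    qed
    have "a < 3" "c < 3" "e < 3" "g < 3" using p q xy(1,2) c(2)
      unfolding pab qcd xef ygh cmp_V_def by auto
    then show False using \<open>e \<noteq> c\<close> \<open>g \<noteq> a\<close> xy(4,5,6) c(1)
      unfolding pab qcd xef ygh by auto
  qed
next
  assume H: "p \<noteq> q \<and> (fst p = fst q \<or> length ns \<ge> 4 \<or> ns ! fst p \<ge> 2 \<or> ns ! fst q \<ge> 2)"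
  obtain a b where pab: "p = (a, b)" by (cases p)
  obtain c d where qcd: "q = (c, d)" by (cases q)
  have ab: "a < length ns" "b < ns ! a" "c < length ns" "d < ns ! c"
    using p q unfolding pab qcd cmp_V_def by auto
  have mem: "(i, 0) \<in> cmp_V ns" if "i < length ns" for i
    using pos that unfolding cmp_V_def by force
  have wit: "P4_ends (cmp_V ns) (cmp_E ns) p q" if
    "x \<in> cmp_V ns" "y \<in> cmp_V ns" "distinct [p, x, y, q]"
    "fst p \<noteq> fst x" "fst x \<noteq> fst y" "fst y \<noteq> fst q" for x y
    using that p q unfolding P4_ends_def cmp_E_def by blast
  consider (same) "a = c" | (four) "a \<noteq> c" "length ns \<ge> 4" | (pa) "a \<noteq> c" "ns ! a \<ge> 2"
    | (qc) "a \<noteq> c" "ns ! c \<ge> 2"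
    using H unfolding pab qcd by auto
  then show "P4_ends (cmp_V ns) (cmp_E ns) p q"
  proof cases
    case same
    obtain j k where "j < length ns" "k < length ns" "j \<noteq> a" "k \<noteq> a" "j \<noteq> k"
      using len by (metis One_nat_def Suc_le_eq less_trans_Suc not_less_eq_eq numeral_3_eq_3 zero_less_Suc)
    then show ?thesis using wit[of "(j,0)" "(k,0)"] mem same H unfolding pab qcd by auto
  next
    case four
    have "\<exists>j k. j < 4 \<and> k < 4 \<and> j \<noteq> a \<and> k \<noteq> a \<and> j \<noteq> c \<and> k \<noteq> c \<and> j \<noteq> k" by presburger
    then obtain j k where "j < 4" "k < 4" "j \<noteq> a" "k \<noteq> a" "j \<noteq> c" "k \<noteq> c" "j \<noteq> k" by blast
    then show ?thesis using wit[of "(j,0)" "(k,0)"] mem four unfolding pab qcd by auto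
  next
    case pa
    have "\<exists>j<3. j \<noteq> a \<and> j \<noteq> c" by presburger
    then obtain j where "j < 3" "j \<noteq> a" "j \<noteq> c" by blast
    moreover have "(a, if b = 0 then 1 else 0) \<in> cmp_V ns" using pa ab unfolding cmp_V_def by auto
    ultimately show ?thesis using wit[of "(j,0)" "(a, if b = 0 then 1 else 0)"] mem pa len
      unfolding pab qcd by auto
  next
    case qc
    have "\<exists>j<3. j \<noteq> a \<and> j \<noteq> c" by presburger
    then obtain j where "j < 3" "j \<noteq> a" "j \<noteq> c" by blast
    moreover have "(c, if d = 0 then 1 else 0) \<in> cmp_V ns" using qc ab unfolding cmp_V_def by auto
    ultimately show ?thesis using wit[of "(c, if d = 0 then 1 else 0)" "(j,0)"] mem qc len
      unfolding pab qcd by auto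
  qed
qed

lemma caseB:
  assumes len: "length ns = 3" and ijk: "i < 3" "j < 3" "k < 3" "i \<noteq> j" "i \<noteq> k" "j \<noteq> k"
    and ni: "ns ! i = 1" and nj: "ns ! j = 1" and nk: "ns ! k \<ge> 2"
  shows "chi_ei (cmp_V ns) (cmp_E ns) = sum_list ns - 1"
proof -
  have cov: "x = i \<or> x = j \<or> x = k" if "x < 3" for x using that ijk by presburger
  have pos: "\<forall>x < length ns. ns ! x \<ge> 1" using cov ni nj nk len by fastforce
  define a where "a = (i, 0::nat)"
  define b where "b = (j, 0::nat)"
  have aV: "a \<in> cmp_V ns" and bV: "b \<in> cmp_V ns" using ijk ni nj len
    unfolding a_def b_def cmp_V_def by auto
  have ab: "a \<noteq> b" using ijk unfolding a_def b_def by auto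
  let ?W = "cmp_V ns - {b}"
  let ?h = "id(b := a)"
  have sing: "p = a \<or> p = b" if "p \<in> cmp_V ns" "ns ! fst p < 2" for p
  proof -
    obtain x y where pxy: "p = (x, y)" by (cases p)
    have "x < 3" "y < ns ! x" using that len unfolding pxy cmp_V_def by auto
    then show ?thesis using cov[of x] ni nj nk that(2) unfolding pxy a_def b_def by auto
  qed
  have "chi_ei (cmp_V ns) (cmp_E ns) = card ?W"
  proof (rule chi_eq)
    show "finite ?W" using fin_V by auto
    show "?W \<subseteq> cmp_V ns" by auto
    show "?h ` cmp_V ns \<subseteq> ?W" using aV ab by auto
    show "\<forall>p\<in>?W. \<forall>q\<in>?W. p \<noteq> q \<longrightarrow> P4_ends (cmp_V ns) (cmp_E ns) p q"
    proof (intro ballI impI)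
      fix p q assume p: "p \<in> ?W" and q: "q \<in> ?W" and pq: "p \<noteq> q"
      have "ns ! fst p \<ge> 2 \<or> ns ! fst q \<ge> 2"
      proof (rule ccontr)
        assume "\<not> ?thesis"
        then have "ns ! fst p < 2" "ns ! fst q < 2" by auto
        then have "p = a \<or> p = b" "q = a \<or> q = b" using sing[of p] sing[of q] p q by blast+
        then have "p = a" "q = a" using p q by blast+
        then show False using pq by simp
      qed
      then show "P4_ends (cmp_V ns) (cmp_E ns) p q"
        using P4_iff[of ns p q] len pos p q pq by auto
    qed
    show "\<forall>p q. P4_ends (cmp_V ns) (cmp_E ns) p q \<longrightarrow> ?h p \<noteq> ?h q"
    proof (intro allI impI)
      fix p q assume P: "P4_ends (cmp_V ns) (cmp_E ns) p q"
      then have pV: "p \<in> cmp_V ns" and qV: "q \<in> cmp_V ns" unfolding P4_ends_def by auto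
      have c: "p \<noteq> q \<and> (fst p = fst q \<or> length ns \<ge> 4 \<or> ns ! fst p \<ge> 2 \<or> ns ! fst q \<ge> 2)"
        using P4_iff[of ns p q] len pos pV qV P by auto
      show "?h p \<noteq> ?h q"
      proof
        assume "?h p = ?h q"
        then have "(p = a \<and> q = b) \<or> (p = b \<and> q = a)" using c by (auto split: if_splits)
        then show False using c len ni nj ijk unfolding a_def b_def by auto
      qed
    qed
  qed
  also have "card ?W = sum_list ns - 1" using bV fin_V card_V by (simp add: card_Diff_singleton)
  finally show ?thesis .
qed

theorem proposition3p7:
  fixes ns :: "nat list" and n :: nat
  assumes "length ns \<ge> 3"
    and "\<forall>i < length ns. ns ! i \<ge> 1"
    and "n = sum_list ns"
  shows "chi_ei (cmp_V ns) (cmp_E ns) =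
    (if ns = [1, 1, 1] then 1
     else if length ns = 3 \<and> n \<ge> 4 \<and>
             ns \<in> {[n - 2, 1, 1], [1, n - 2, 1], [1, 1, n - 2]} then n - 1
     else n)"
proof (cases "ns = [1, 1, 1]")
  case True
  have "chi_ei (cmp_V ns) (cmp_E ns) = card {(0::nat, 0::nat)}"
  proof (rule chi_eq)
    show "(\<lambda>_. (0, 0)) ` cmp_V ns \<subseteq> {(0, 0)}" by auto
    show "{(0::nat, 0::nat)} \<subseteq> cmp_V ns" using True unfolding cmp_V_def by auto
    show "\<forall>p q. P4_ends (cmp_V ns) (cmp_E ns) p q \<longrightarrow> (\<lambda>_. (0::nat, 0::nat)) p \<noteq> (\<lambda>_. (0, 0)) q"
    proof (intro allI impI)
      fix p q assume P: "P4_ends (cmp_V ns) (cmp_E ns) p q"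
      then have pV: "p \<in> cmp_V ns" and qV: "q \<in> cmp_V ns" unfolding P4_ends_def by auto
      have "fst p < 3" "fst q < 3" "snd p = 0" "snd q = 0" using pV qV True unfolding cmp_V_def
        by (auto simp: less_Suc_eq nth_Cons split: nat.splits)
      then have "ns ! fst p = 1" "ns ! fst q = 1" using True by (auto simp: less_Suc_eq numeral_3_eq_3)
      then have "p = q" using P4_iff[of ns p q] assms pV qV P \<open>snd p = 0\<close> \<open>snd q = 0\<close> True
        by (auto simp: prod_eq_iff)
      then show "(\<lambda>_. (0::nat, 0::nat)) p \<noteq> (\<lambda>_. (0, 0)) q" using P
        unfolding P4_ends_def by auto
    qed
  qed auto
  then show ?thesis using True by simp
next
  case notA: False
  show ?thesis
  proof (cases "length ns = 3 \<and> n \<ge> 4 \<and> ns \<in> {[n - 2, 1, 1], [1, n - 2, 1], [1, 1, n - 2]}")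
    case True
    then have n4: "n - 2 \<ge> 2" by auto
    from True consider "ns = [n - 2, 1, 1]" | "ns = [1, n - 2, 1]" | "ns = [1, 1, n - 2]" by auto
    then have "chi_ei (cmp_V ns) (cmp_E ns) = n - 1"
    proof cases
      case 1
      then have "length ns = 3" "ns ! 1 = 1" "ns ! 2 = 1" "ns ! 0 \<ge> 2" using n4 by simp_all
      then show ?thesis using caseB[of ns 1 2 0] assms(3) by simp
    next
      case 2
      then have "length ns = 3" "ns ! 0 = 1" "ns ! 2 = 1" "ns ! 1 \<ge> 2" using n4 by simp_all
      then show ?thesis using caseB[of ns 0 2 1] assms(3) by simp
    next
      case 3
      then have "length ns = 3" "ns ! 0 = 1" "ns ! 1 = 1" "ns ! 2 \<ge> 2" using n4 by simp_all
      then show ?thesis using caseB[of ns 0 1 2] assms(3) by simp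
    qed
    then show ?thesis using True notA by simp
  next
    case notB: False
    have "chi_ei (cmp_V ns) (cmp_E ns) = card (cmp_V ns)"
    proof (rule chi_eq)
      show "finite (cmp_V ns)" by (rule fin_V)
      show "id ` cmp_V ns \<subseteq> cmp_V ns" by auto
      show "\<forall>p\<in>cmp_V ns. \<forall>q\<in>cmp_V ns. p \<noteq> q \<longrightarrow> P4_ends (cmp_V ns) (cmp_E ns) p q"
      proof (intro ballI impI)
        fix p q assume pV: "p \<in> cmp_V ns" and qV: "q \<in> cmp_V ns" and pq: "p \<noteq> q"
        have "fst p = fst q \<or> length ns \<ge> 4 \<or> ns ! fst p \<ge> 2 \<or> ns ! fst q \<ge> 2"
        proof (rule ccontr)
          assume H: "\<not> ?thesis"
          then have l3: "length ns = 3" using assms(1) by auto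
          have "\<exists>x y z. ns = [x, y, z]" using l3 by (auto simp: length_Suc_conv numeral_3_eq_3)
          then obtain x y z where nsxyz: "ns = [x, y, z]" by blast
          have fp: "fst p < 3" "fst q < 3" using pV qV l3 unfolding cmp_V_def by auto
          have "ns ! fst p = 1" "ns ! fst q = 1" using H assms(2) fp l3 by fastforce+
          then have "(x = 1 \<and> y = 1) \<or> (x = 1 \<and> z = 1) \<or> (y = 1 \<and> z = 1)"
            using fp H unfolding nsxyz
            by (auto simp: less_Suc_eq numeral_3_eq_3)
          moreover have ge: "x \<ge> 1" "y \<ge> 1" "z \<ge> 1" using assms(2) unfolding nsxyz by auto
          moreover have n: "n = x + y + z" using assms(3) unfolding nsxyz by simp
          ultimately consider "x = 1" "y = 1" | "x = 1" "z = 1" | "y = 1" "z = 1" by blast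
          then show False
          proof cases
            case 1 then show False using notA notB n ge unfolding nsxyz
              by (cases "z = 1") auto
          next
            case 2 then show False using notA notB n ge unfolding nsxyz
              by (cases "y = 1") auto
          next
            case 3 then show False using notA notB n ge unfolding nsxyz
              by (cases "x = 1") auto
          qed
        qed
        then show "P4_ends (cmp_V ns) (cmp_E ns) p q" using P4_iff[of ns p q] assms pV qV pq by auto
      qed
      show "\<forall>p q. P4_ends (cmp_V ns) (cmp_E ns) p q \<longrightarrow> id p \<noteq> id q"
        unfolding P4_ends_def by auto
    qed auto
    then show ?thesis unfolding if_not_P[OF notA] if_not_P[OF notB] using card_V assms(3) by simp
  qed
qed

end
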